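(* Assume $n\ge3$ and $3\le a\le n$. Let $(i_1,\dots,i_a)\in J^a$ with $i_1\prec i_2\prec\cdots\prec i_a$, and suppose it has at least one breaking pair. Let $(k,l)$ be the breaking pair with the largest value $q$ (i.e. $i_k=q$, $i_l=\bar q$, $n+k-l<q$, and no breaking pair has larger value). Then the number of entries strictly between positions $k$ and $l$ equals $n-q$, i.e. $l-k-1=n-q$.
   Context: Let $J=\{1\prec2\prec\cdots\prec n\prec\bar n\prec\cdots\prec\bar2\prec\bar1\}$ be a totally ordered set of $2n$ symbols. For a sequence $(i_1,\dots,i_a)\in J^a$, a breaking pair is a pair of positions $k<l$ with $i_k=c$ and $i_l=\bar c$ for some $1\le c\le n$ such that $n+k-l<c$; its value is $c$. *)

theory Defs
  imports Main
begin

text \<open>Symbols of J: Unb c stands for c, Bar c stands for bar c (1 <= c <= n).\<close>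
datatype sym = Unb nat | Bar nat

fun sym_prec :: "sym \<Rightarrow> sym \<Rightarrow> bool" where
  "sym_prec (Unb c) (Unb d) = (c < d)"
| "sym_prec (Unb c) (Bar d) = True"
| "sym_prec (Bar c) (Unb d) = False"
| "sym_prec (Bar c) (Bar d) = (d < c)"

definition in_J :: "nat \<Rightarrow> sym \<Rightarrow> bool" where
  "in_J n s = (case s of Unb c \<Rightarrow> 1 \<le> c \<and> c \<le> n | Bar c \<Rightarrow> 1 \<le> c \<and> c \<le> n)"

text \<open>A sequence (i_1,...,i_a) in J^a is a function on positions 1..a.
  (k,l) is a breaking pair of value c.\<close>
definition breaking_pair :: "nat \<Rightarrow> nat \<Rightarrow> (nat \<Rightarrow> sym) \<Rightarrow> nat \<Rightarrow> nat \<Rightarrow> nat \<Rightarrow> bool" where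
  "breaking_pair n a i k l c =
     (1 \<le> k \<and> k < l \<and> l \<le> a \<and> 1 \<le> c \<and> c \<le> n \<and>
      i k = Unb c \<and> i l = Bar c \<and> int n + int k - int l < int c)"

end

theory Submission
  imports Defs
begin

fun sv :: "sym \<Rightarrow> nat" where
  "sv (Unb c) = c" | "sv (Bar c) = c"

lemma sp_trans: "sym_prec x y \<Longrightarrow> sym_prec y z \<Longrightarrow> sym_prec x z"
  by (cases x; cases y; cases z) auto

lemma sp_irr: "\<not> sym_prec x x"
  by (cases x) auto

lemma mono_seq:
  fixes p' :: nat
  assumes "\<forall>p. 1 \<le> p \<and> p < a \<longrightarrow> sym_prec (i p) (i (p + 1))"
    and "1 \<le> p"
  shows "p < p' \<Longrightarrow> p' \<le> a \<Longrightarrow> sym_prec (i p) (i p')"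
proof (induction p')
  case 0 then show ?case by simp
next
  case (Suc m)
  show ?case
  proof (cases "p = m")
    case True then show ?thesis using assms(1,2) Suc by auto
  next
    case False
    then have "sym_prec (i p) (i m)" using Suc by auto
    moreover have "sym_prec (i m) (i (m+1))" using assms(1,2) Suc False by auto
    ultimately show ?thesis using sp_trans by auto
  qed
qed

lemma inj_seq:
  fixes a :: nat
  assumes "\<forall>p. 1 \<le> p \<and> p < a \<longrightarrow> sym_prec (i p) (i (p + 1))"
  shows "inj_on i {1..a}"
proof (rule inj_onI)
  fix x y assume "x \<in> {1..a}" "y \<in> {1..a}" "i x = i y"
  show "x = y"
  proof (rule ccontr)
    assume "x \<noteq> y"
    then have "x < y \<or> y < x" by arith
    then show False
      using mono_seq[OF assms] \<open>x \<in> {1..a}\<close> \<open>y \<in> {1..a}\<close> \<open>i x = i y\<close> sp_irr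
      by (metis atLeastAtMost_iff)
  qed
qed

theorem mainTheorem16:
  fixes n a :: nat and i :: "nat \<Rightarrow> sym" and k l q :: nat
  assumes "n \<ge> 3" and "3 \<le> a" and "a \<le> n"
    and "\<forall>p\<in>{1..a}. in_J n (i p)"
    and "\<forall>p. 1 \<le> p \<and> p < a \<longrightarrow> sym_prec (i p) (i (p + 1))"
    and "breaking_pair n a i k l q"
    and "\<forall>k' l' c'. breaking_pair n a i k' l' c' \<longrightarrow> c' \<le> q"
  shows "int l - int k - 1 = int n - int q"
proof -
  note bp = assms(6)[unfolded breaking_pair_def]
  note mono = mono_seq[OF assms(5)]
  have inj: "inj_on i {1..a}" by (rule inj_seq[OF assms(5)])
  have ge: "l - k - 1 \<ge> n - q" using bp by linarith
  have rng: "\<exists>d. q < d \<and> d \<le> n \<and> (i p = Unb d \<or> i p = Bar d)" if "p \<in> {k<..<l}" for p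
  proof -
    have "sym_prec (Unb q) (i p)" using mono[of k p] bp that by auto
    moreover have "sym_prec (i p) (Bar q)" using mono[of p l] bp that by auto
    moreover have "in_J n (i p)" using assms(4) bp that by auto
    ultimately show ?thesis by (cases "i p") (auto simp: in_J_def)
  qed
  define S where "S = i ` {k<..<l}"
  have subI: "{k<..<l} \<subseteq> {1..a}" using bp by auto
  have cardS: "card S = l - k - 1"
    unfolding S_def using card_image[OF inj_on_subset[OF inj subI]] by simp
  have finS: "finite S" unfolding S_def by simp
  show ?thesis
  proof (rule ccontr)
    assume "\<not> ?thesis"
    then have big: "l - k - 1 > n - q" using ge bp by linarith
    define C where "C = {c. Unb c \<in> S \<and> Bar c \<in> S}"
    have Cne: "C \<noteq> {}"
    proof
      assume "C = {}"
      have "inj_on sv S"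
      proof (rule inj_onI)
        fix x y assume "x \<in> S" "y \<in> S" "sv x = sv y"
        then show "x = y" using \<open>C = {}\<close> unfolding C_def
          by (cases x; cases y) auto
      qed
      moreover have "sv ` S \<subseteq> {q<..n}"
        using rng unfolding S_def by fastforce
      ultimately have "card S \<le> card {q<..n}"
        using card_inj_on_le[of sv S "{q<..n}"] by simp
      then have "card S \<le> n - q" by simp
      then show False using big cardS by simp
    qed
    have finC: "finite C"
    proof -
      have "C \<subseteq> sv ` S" unfolding C_def by force
      then show ?thesis using finS finite_subset by blast
    qed
    define c where "c = Min C"
    have cC: "c \<in> C" using Cne finC c_def by simp
    have cmin: "\<And>d. d \<in> C \<Longrightarrow> c \<le> d" using finC c_def by simp
    obtain k' where k': "k' \<in> {k<..<l}" "i k' = Unb c" using cC unfolding C_def S_def by auto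
    obtain l' where l': "l' \<in> {k<..<l}" "i l' = Bar c" using cC unfolding C_def S_def by auto
    have cq: "q < c" "c \<le> n" using rng[OF k'(1)] k'(2) by auto
    have kl': "k' < l'"
    proof (rule ccontr)
      assume "\<not> k' < l'"
      then have "l' < k'" using k' l' by (metis linorder_neqE_nat sym.distinct(1))
      then have "sym_prec (i l') (i k')" using mono[of l' k'] k' l' bp by auto
      then show False using k' l' by simp
    qed
    define Slo where "Slo = {s\<in>S. sv s < c}"
    define Shi where "Shi = {s\<in>S. sv s > c}"
    have Sdec: "S = Slo \<union> {Unb c, Bar c} \<union> Shi"
    proof -
      have e: "\<And>x. sv x = c \<Longrightarrow> x = Unb c \<or> x = Bar c" by (metis sv.elims)
      have "\<And>x. \<not> sv x < c \<Longrightarrow> \<not> c < sv x \<Longrightarrow> sv x = c" by arith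
      then have "\<And>x. x \<in> S \<Longrightarrow> x \<in> Slo \<or> x = Unb c \<or> x = Bar c \<or> x \<in> Shi"
        unfolding Slo_def Shi_def using e by (simp (no_asm_simp)) (meson)
      then show ?thesis using cC unfolding Slo_def Shi_def C_def by auto
    qed
    have fin1: "finite Slo" "finite Shi" using finS unfolding Slo_def Shi_def by auto
    have d1: "(Slo \<union> {Unb c, Bar c}) \<inter> Shi = {}" unfolding Slo_def Shi_def by auto
    have d2: "Slo \<inter> {Unb c, Bar c} = {}" unfolding Slo_def by auto
    have "card S = card (Slo \<union> {Unb c, Bar c}) + card Shi"
      using Sdec card_Un_disjoint[OF _ fin1(2) d1] fin1(1) by simp
    also have "card (Slo \<union> {Unb c, Bar c}) = card Slo + card {Unb c, Bar c}"
      using card_Un_disjoint[OF fin1(1) _ d2] by simp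
    finally have "card S = card Slo + card {Unb c, Bar c} + card Shi" .
    then have cs: "card S = card Slo + 2 + card Shi" by simp
    have "inj_on sv Slo"
    proof (rule inj_onI)
      fix x y assume "x \<in> Slo" "y \<in> Slo" "sv x = sv y"
      show "x = y"
      proof (rule ccontr)
        assume "x \<noteq> y"
        then have "sv x \<in> C" using \<open>x \<in> Slo\<close> \<open>y \<in> Slo\<close> \<open>sv x = sv y\<close>
          unfolding C_def Slo_def by (cases x; cases y) auto
        then show False using cmin \<open>x \<in> Slo\<close> unfolding Slo_def by fastforce
      qed
    qed
    moreover have "sv ` Slo \<subseteq> {q<..<c}"
      using rng unfolding Slo_def S_def by fastforce
    ultimately have "card Slo \<le> card {q<..<c}"
      using card_inj_on_le[of sv Slo "{q<..<c}"] by simp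
    then have lo: "card Slo \<le> c - q - 1" by simp
    have "Shi = i ` {k'<..<l'}"
    proof
      show "Shi \<subseteq> i ` {k'<..<l'}"
      proof
        fix s assume "s \<in> Shi"
        then obtain p where p: "p \<in> {k<..<l}" "s = i p" "sv s > c" unfolding Shi_def S_def by auto
        have "p \<noteq> k'" "p \<noteq> l'" using p k' l' by auto
        moreover have False if "p < k'"
        proof -
          have "sym_prec (i p) (Unb c)" using mono[of p k'] that p k' bp by auto
          then show False using p by (cases "i p") auto
        qed
        moreover have False if "p > l'"
        proof -
          have "sym_prec (Bar c) (i p)" using mono[of l' p] that p l' bp by auto
          then show False using p by (cases "i p") auto
        qed
        ultimately have "p \<in> {k'<..<l'}" by force
        then show "s \<in> i ` {k'<..<l'}" using p by auto
      qed
    next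
      show "i ` {k'<..<l'} \<subseteq> Shi"
      proof
        fix s assume "s \<in> i ` {k'<..<l'}"
        then obtain p where p: "p \<in> {k'<..<l'}" "s = i p" by auto
        have "sym_prec (Unb c) (i p)" using mono[of k' p] p k' l' bp by auto
        moreover have "sym_prec (i p) (Bar c)" using mono[of p l'] p k' l' bp by auto
        ultimately have "sv s > c" using p by (cases "i p") auto
        moreover have "s \<in> S" using p k' l' unfolding S_def by auto
        ultimately show "s \<in> Shi" unfolding Shi_def by auto
      qed
    qed
    moreover have "{k'<..<l'} \<subseteq> {1..a}" using k' l' bp by auto
    ultimately have hi: "card Shi = l' - k' - 1"
      using card_image[OF inj_on_subset[OF inj]] by simp
    have "breaking_pair n a i k' l' c"
      unfolding breaking_pair_def using k' l' kl' cq bp lo hi cs cardS big by auto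
    then show False using assms(7) cq by force
  qed
qed

end
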